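(* Let $N,d\ge 1$ and let $\mathcal{U}=\{[\mathbf{x},\mathbf{h}]\in\mathbb{R}^{N\times(3+d)}:\ \tfrac1N\sum_{i=1}^N\mathbf{x}^{(i)}=0\}$, where $\mathbf{x}=(\mathbf{x}^{(1)},\dots,\mathbf{x}^{(N)})\in\mathbb{R}^{N\times 3}$ and $\mathbf{h}\in\mathbb{R}^{N\times d}$. Let $\mathrm{O}(3)$ act on $\mathcal{U}$ by $R\cdot[\mathbf{x},\mathbf{h}]=[R\mathbf{x}^{(1)},\dots,R\mathbf{x}^{(N)},\mathbf{h}]$, and let $\lambda$ be the Haar probability measure on $\mathrm{O}(3)$. Let $q(\mathbf{z}_0)$ be a probability distribution on $\mathcal{U}$, let $\alpha_t,\sigma_t>0$ and $w(t)\ge 0$ be constants, and let $\epsilon_\theta:\mathcal{U}\to\mathcal{U}$ be a measurable function. Let $\mathcal{N}_\mathcal{U}(0,\mathbf{I})$ be the distribution of $\mathrm{proj}_\mathcal{U}(\epsilon)$ with $\epsilon\sim\mathcal{N}(0,\mathbf{I})$ on $\mathbb{R}^{N\times(3+d)}$, where $\mathrm{proj}_\mathcal{U}([\mathbf{x},\mathbf{h}])=[\mathbf{x}-(\bar{\mathbf{x}},\dots,\bar{\mathbf{x}}),\mathbf{h}]$ with $\bar{\mathbf{x}}=\tfrac1N\sum_i\mathbf{x}^{(i)}$. Let $\gamma_\theta:\mathcal{U}\to\mathrm{O}(3)$ be a Markov kernel and define $$\mathcal{L}_t=\mathbb{E}_{\mathbf{z}_0\sim q,\ \epsilon\sim\mathcal{N}_\mathcal{U}(0,\mathbf{I}),\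 R\sim\gamma_\theta(dR\mid\mathbf{z}_t)}\Big[\tfrac12 w(t)\big\|\epsilon-R\cdot\epsilon_\theta(R^{T}\cdot\mathbf{z}_t)\big\|^2\Big],\quad \mathbf{z}_t=\alpha_t\mathbf{z}_0+\sigma_t\epsilon,$$ $$\mathcal{L}_t^{\mathrm{aug}}=\mathbb{E}_{\mathbf{z}_0\sim q,\ \epsilon\sim\mathcal{N}_\mathcal{U}(0,\mathbf{I}),\ R\sim\lambda}\Big[\tfrac12 w(t)\big\|\epsilon-\epsilon_\theta(\alpha_t R\cdot\mathbf{z}_0+\sigma_t\epsilon)\big\|^2\Big],$$ with $\mathbf{z}_0,\epsilon$ independent (and $R$ independent of them in $\mathcal{L}_t^{\mathrm{aug}}$). If $\gamma_\theta(dR\mid\mathbf{z})=\lambda(dR)$ for all $\mathbf{z}\in\mathcal{U}$, then $\mathcal{L}_t=\mathcal{L}_t^{\mathrm{aug}}$.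
   Context: $\|\cdot\|$ denotes the Euclidean (Frobenius) norm on $\mathbb{R}^{N\times(3+d)}$. $\mathrm{O}(3)$ is the group of orthogonal $3\times3$ real matrices. A Markov kernel $\gamma_\theta:\mathcal{U}\to\mathrm{O}(3)$ assigns to each $\mathbf{z}\in\mathcal{U}$ a probability distribution on $\mathrm{O}(3)$. *)

theory Defs
  imports "HOL-Probability.Probability"
begin

text \<open>Points of R^{N x (3+d)}: the N rows x^(i) in R^3 together with h in R^{N x d}.
  N = CARD('n), d = CARD('d). The norm of the product type is the Frobenius norm.\<close>
type_synonym ('n, 'd) pt = "((real^3)^'n) \<times> ((real^'d)^'n)"

definition Uspace :: "('n::finite, 'd::finite) pt set" where
  "Uspace = {(x, h). (1 / real CARD('n)) *\<^sub>R (\<Sum>i\<in>UNIV. x $ i) = 0}"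

definition projU :: "('n::finite, 'd::finite) pt \<Rightarrow> ('n, 'd) pt" where
  "projU z = (let xbar = (1 / real CARD('n)) *\<^sub>R (\<Sum>i\<in>UNIV. fst z $ i)
              in ((\<chi> i. fst z $ i - xbar), snd z))"

definition O3 :: "(real^3^3) set" where
  "O3 = {R. orthogonal_matrix R}"

definition act :: "real^3^3 \<Rightarrow> ('n::finite, 'd::finite) pt \<Rightarrow> ('n, 'd) pt" where
  "act R z = ((\<chi> i. R *v (fst z $ i)), snd z)"

definition std_gauss :: "('a::euclidean_space) measure" where
  "std_gauss = density lborel
     (\<lambda>x. ennreal ((2 * pi) powr (- real DIM('a) / 2) * exp (- (norm x)\<^sup>2 / 2)))"

definition gaussU :: "('n::finite, 'd::finite) pt measure" where
  "gaussU = distr std_gauss borel projU"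

text \<open>Haar probability measure on O(3): a probability measure on the Borel sets of
  3x3 matrices, concentrated on O(3), invariant under left translation by O(3).
  (Such a measure is unique.)\<close>
definition is_haar_O3 :: "(real^3^3) measure \<Rightarrow> bool" where
  "is_haar_O3 lam \<longleftrightarrow> prob_space lam \<and> sets lam = sets borel \<and> emeasure lam O3 = 1 \<and>
     (\<forall>R\<in>O3. distr lam borel (\<lambda>A. R ** A) = lam)"

definition loss_t ::
  "('n::finite, 'd::finite) pt measure \<Rightarrow> real \<Rightarrow> real \<Rightarrow> real \<Rightarrow>
   (('n, 'd) pt \<Rightarrow> ('n, 'd) pt) \<Rightarrow> (('n, 'd) pt \<Rightarrow> (real^3^3) measure) \<Rightarrow> ennreal" where
  "loss_t q a s w epsth gam =
     (\<integral>\<^sup>+ z0. \<integral>\<^sup>+ e. (let zt = a *\<^sub>R z0 + s *\<^sub>R e in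
        \<integral>\<^sup>+ R. ennreal (1/2 * w * (norm (e - act R (epsth (act (transpose R) zt))))\<^sup>2) \<partial>gam zt)
      \<partial>gaussU \<partial>q)"

definition loss_aug ::
  "('n::finite, 'd::finite) pt measure \<Rightarrow> real \<Rightarrow> real \<Rightarrow> real \<Rightarrow>
   (('n, 'd) pt \<Rightarrow> ('n, 'd) pt) \<Rightarrow> (real^3^3) measure \<Rightarrow> ennreal" where
  "loss_aug q a s w epsth lam =
     (\<integral>\<^sup>+ z0. \<integral>\<^sup>+ e. \<integral>\<^sup>+ R.
        ennreal (1/2 * w * (norm (e - epsth (a *\<^sub>R act R z0 + s *\<^sub>R e)))\<^sup>2) \<partial>lam \<partial>gaussU \<partial>q)"

end

theory Submission
  imports Defs "HOL-Analysis.Analysis"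
begin

typedef (overloaded) ('a::euclidean_space) bidx = "{..<DIM('a)}"
  by (rule exI[of _ 0]) simp

instance bidx :: (euclidean_space) finite
proof
  have "(UNIV :: 'a bidx set) = Abs_bidx ` {..<DIM('a)}"
    using type_definition.Abs_image[OF type_definition_bidx[where 'a='a]] by simp
  then show "finite (UNIV :: 'a bidx set)" by (metis finite_imageI finite_lessThan)
qed

instantiation bidx :: (euclidean_space) linorder
begin
definition less_eq_bidx :: "'a bidx \<Rightarrow> 'a bidx \<Rightarrow> bool" where "less_eq_bidx x y = (Rep_bidx x \<le> Rep_bidx y)"
definition less_bidx :: "'a bidx \<Rightarrow> 'a bidx \<Rightarrow> bool" where "less_bidx x y = (Rep_bidx x < Rep_bidx y)"
instance by standard (auto simp: less_eq_bidx_def less_bidx_def Rep_bidx_inject)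
end

instance bidx :: (euclidean_space) wellorder
proof
  fix P :: "'a bidx \<Rightarrow> bool" and a
  assume step: "\<And>x. (\<And>y. y < x \<Longrightarrow> P y) \<Longrightarrow> P x"
  have "\<forall>x. Rep_bidx x = n \<longrightarrow> P x" for n
  proof (induction n rule: less_induct)
    case (less n)
    show ?case
    proof (intro allI impI)
      fix x :: "'a bidx" assume "Rep_bidx x = n"
      then show "P x" using less step by (auto simp: less_bidx_def)
    qed
  qed
  then show "P a" by blast
qed

definition eb :: "'a::euclidean_space bidx \<Rightarrow> 'a" where
  "eb i = (SOME h. bij_betw h {0..<DIM('a)} Basis) (Rep_bidx i)"

lemma eb_bij: "bij_betw (eb :: 'a::euclidean_space bidx \<Rightarrow> 'a) UNIV Basis"
proof -
  define h where "h = (SOME h. bij_betw h {0..<DIM('a)} (Basis :: 'a set))"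
  have "\<exists>h. bij_betw h {0..<DIM('a)} (Basis :: 'a set)"
    by (rule ex_bij_betw_nat_finite) simp
  then have h: "bij_betw h {0..<DIM('a)} (Basis :: 'a set)" unfolding h_def by (rule someI_ex)
  have r: "bij_betw Rep_bidx (UNIV :: 'a bidx set) {0..<DIM('a)}"
    using type_definition.Rep_range[OF type_definition_bidx] Rep_bidx_inject
    by (auto simp: bij_betw_def inj_on_def atLeast0LessThan)
  have "eb = h \<circ> Rep_bidx" unfolding eb_def h_def by (simp add: fun_eq_iff)
  then show ?thesis using bij_betw_trans[OF r h] by simp
qed

lemma eb_Basis: "eb i \<in> Basis" using eb_bij by (auto simp: bij_betw_def)
lemma eb_inj: "eb i = eb j \<longleftrightarrow> i = j" using eb_bij by (auto simp: bij_betw_def inj_on_def)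

definition Phi :: "'a::euclidean_space \<Rightarrow> (real, 'a bidx) vec" where
  "Phi x = (\<chi> i. x \<bullet> eb i)"
definition Psi :: "(real, 'a::euclidean_space bidx) vec \<Rightarrow> 'a" where
  "Psi y = (\<Sum>i\<in>UNIV. y $ i *\<^sub>R eb i)"

lemma Psi_inner: "Psi y \<bullet> eb i = y $ i"
proof -
  have "Psi y \<bullet> eb i = (\<Sum>j\<in>UNIV. y $ j * (eb j \<bullet> eb i))"
    by (simp add: Psi_def inner_sum_left)
  also have "\<dots> = (\<Sum>j\<in>UNIV. if j = i then y $ i else 0)"
    by (rule sum.cong) (auto simp: eb_Basis eb_inj inner_not_same_Basis)
  finally show ?thesis by simp
qed

lemma Phi_Psi: "Phi (Psi y) = y"
  by (simp add: Phi_def Psi_inner vec_eq_iff)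

lemma Psi_Phi: "Psi (Phi x) = x"
proof -
  have "Psi (Phi x) = (\<Sum>i\<in>UNIV. (x \<bullet> eb i) *\<^sub>R eb i)" by (simp add: Psi_def Phi_def)
  also have "\<dots> = (\<Sum>b\<in>Basis. (x \<bullet> b) *\<^sub>R b)"
    using sum.reindex_bij_betw[OF eb_bij, of "\<lambda>b. (x \<bullet> b) *\<^sub>R b"] by simp
  also have "\<dots> = x" by (rule euclidean_representation)
  finally show ?thesis .
qed

lemma linear_Phi: "linear Phi"
  by (rule linearI) (simp_all add: Phi_def vec_eq_iff inner_add_left)
lemma linear_Psi: "linear Psi"
  by (rule linearI) (simp_all add: Psi_def scaleR_add_left sum.distrib scaleR_sum_right)

lemma meas_Phi: "Phi \<in> borel_measurable borel"
  by (rule borel_measurable_continuous_onI) (simp add: linear_Phi linear_continuous_on linear_linear)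
lemma meas_Psi: "Psi \<in> borel_measurable borel"
  by (rule borel_measurable_continuous_onI) (simp add: linear_Psi linear_continuous_on linear_linear)

lemma prod_Basis_cart: "(\<Prod>b\<in>Basis. (x :: (real,'k::finite) vec) \<bullet> b) = (\<Prod>i\<in>UNIV. x $ i)"
  by (simp add: Basis_vec_def cart_eq_inner_axis axis_eq_axis prod.UNION_disjoint)

lemma distr_Phi: "distr (lborel :: 'a::euclidean_space measure) borel Phi = lborel"
proof (rule lborel_eqI[symmetric])
  fix l u :: "(real, 'a bidx) vec" assume le: "\<And>b. b \<in> Basis \<Longrightarrow> l \<bullet> b \<le> u \<bullet> b"
  have le': "l $ i \<le> u $ i" for i
    using le[of "axis i 1"] by (auto simp: Basis_vec_def cart_eq_inner_axis)
  have pre: "Phi -` box l u = box (Psi l) (Psi u)"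
  proof -
    have "x \<in> box (Psi l) (Psi u) \<longleftrightarrow> (\<forall>i. l $ i < x \<bullet> eb i \<and> x \<bullet> eb i < u $ i)" for x :: 'a
    proof -
      have "x \<in> box (Psi l) (Psi u) \<longleftrightarrow> (\<forall>b\<in>Basis. Psi l \<bullet> b < x \<bullet> b \<and> x \<bullet> b < Psi u \<bullet> b)"
        by (simp add: mem_box)
      also have "\<dots> \<longleftrightarrow> (\<forall>i. Psi l \<bullet> eb i < x \<bullet> eb i \<and> x \<bullet> eb i < Psi u \<bullet> eb i)"
        using eb_bij by (auto simp: bij_betw_def eb_Basis) (metis rangeE)+
      finally show ?thesis by (simp add: Psi_inner)
    qed
    then show ?thesis by (auto simp: mem_box_cart Phi_def)
  qed
  have "emeasure (distr lborel borel Phi) (box l u) = emeasure lborel (Phi -` box l u)"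
    apply (subst emeasure_distr)
    using meas_Phi apply simp_all done
  also have "\<dots> = emeasure lborel (box (Psi l) (Psi u) :: 'a set)" by (simp add: pre)
  also have "\<dots> = (\<Prod>b\<in>Basis. (Psi u - Psi l) \<bullet> b)"
  proof (rule emeasure_lborel_box)
    fix b :: 'a assume "b \<in> Basis"
    then obtain i where "b = eb i" using eb_bij by (auto simp: bij_betw_def)
    then show "Psi l \<bullet> b \<le> Psi u \<bullet> b" by (simp add: Psi_inner le')
  qed
  also have "\<dots> = (\<Prod>i\<in>UNIV. (Psi u - Psi l) \<bullet> eb i)"
    using prod.reindex_bij_betw[OF eb_bij, of "\<lambda>b. (Psi u - Psi l) \<bullet> b"] by simp
  also have "\<dots> = (\<Prod>i\<in>UNIV. (u - l) $ i)" by (simp add: inner_diff_left Psi_inner)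
  also have "\<dots> = (\<Prod>b\<in>Basis. (u - l) \<bullet> b)" by (simp add: prod_Basis_cart)
  finally show "emeasure (distr lborel borel Phi) (box l u) = (\<Prod>b\<in>Basis. (u - l) \<bullet> b)" .
qed simp

lemma lborel_orth_cart:
  fixes L :: "(real, 'k::{finite,wellorder}) vec \<Rightarrow> (real, 'k) vec"
  assumes L: "orthogonal_transformation L"
  shows "distr lborel borel L = lborel"
proof (rule lborel_eqI[symmetric])
  have linL: "linear L" using L by (rule orthogonal_transformation_linear)
  have contL: "continuous_on UNIV L" by (simp add: linL linear_continuous_on linear_linear)
  have mL: "L \<in> borel_measurable borel" using contL by (rule borel_measurable_continuous_onI)
  fix l u :: "(real, 'k) vec" assume le: "\<And>b. b \<in> Basis \<Longrightarrow> l \<bullet> b \<le> u \<bullet> b"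
  define L' where "L' = inv L"
  have L': "orthogonal_transformation L'" unfolding L'_def using L by (rule orthogonal_transformation_inv)
  have bijL: "bij L" using L by (rule orthogonal_transformation_bij)
  have pre: "L -` box l u = L' ` box l u"
    unfolding L'_def using bijL by (simp add: bij_vimage_eq_inv_image)
  have opn: "open (L -` box l u)" by (rule open_vimage[OF open_box contL])
  have bs: "L -` box l u \<in> sets lborel" using opn by simp
  have lm: "L' ` box l u \<in> lmeasurable" using L' by (rule measurable_orthogonal_image) simp
  have "emeasure (distr lborel borel L) (box l u) = emeasure lborel (L -` box l u)"
    using mL by (simp add: emeasure_distr)
  also have "\<dots> = emeasure lebesgue (L -` box l u)" using bs by simp
  also have "\<dots> = ennreal (measure lebesgue (L' ` box l u))" using lm pre
    by (simp add: emeasure_eq_measure2)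
  also have "\<dots> = ennreal (measure lebesgue (box l u))"
    using L' by (simp add: measure_orthogonal_image)
  also have "\<dots> = emeasure lborel (box l u)"
    by (simp add: emeasure_eq_measure2 emeasure_lborel_box_finite)
  also have "\<dots> = (\<Prod>b\<in>Basis. (u - l) \<bullet> b)" using le by simp
  finally show "emeasure (distr lborel borel L) (box l u) = (\<Prod>b\<in>Basis. (u - l) \<bullet> b)" .
qed simp

lemma Phi_inner: "Phi x \<bullet> Phi y = x \<bullet> y"
proof -
  have "Phi x \<bullet> Phi y = (\<Sum>i\<in>UNIV. (x \<bullet> eb i) * (y \<bullet> eb i))"
    by (simp add: Phi_def inner_vec_def)
  also have "\<dots> = (\<Sum>b\<in>Basis. (x \<bullet> b) * (y \<bullet> b))"
    using sum.reindex_bij_betw[OF eb_bij, of "\<lambda>b. (x \<bullet> b) * (y \<bullet> b)"] by simp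
  also have "\<dots> = x \<bullet> y" by (rule euclidean_inner[symmetric])
  finally show ?thesis .
qed

lemma Psi_inner2: "Psi x \<bullet> Psi y = x \<bullet> y"
  by (metis Phi_inner Phi_Psi)

lemma lborel_Psi: "distr lborel borel Psi = (lborel :: 'a::euclidean_space measure)"
proof -
  have "distr (lborel :: (real, 'a bidx) vec measure) borel Psi
        = distr (distr (lborel :: 'a measure) borel Phi) borel Psi" by (simp add: distr_Phi)
  also have "\<dots> = distr lborel borel (Psi \<circ> Phi)"
    by (rule distr_distr) (simp_all add: meas_Phi meas_Psi)
  also have "Psi \<circ> Phi = (\<lambda>x::'a. x)" by (simp add: fun_eq_iff Psi_Phi)
  also have "distr lborel borel (\<lambda>x::'a. x) = lborel" by (rule distr_id2) simp
  finally show ?thesis .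
qed

lemma lborel_orth_invariant:
  fixes L :: "'a::euclidean_space \<Rightarrow> 'a"
  assumes L: "orthogonal_transformation L"
  shows "distr lborel borel L = lborel"
proof -
  define L' :: "(real, 'a bidx) vec \<Rightarrow> (real, 'a bidx) vec" where "L' = (\<lambda>y. Phi (L (Psi y)))"
  have linL: "linear L" using L by (rule orthogonal_transformation_linear)
  have mL: "L \<in> borel_measurable borel"
    by (rule borel_measurable_continuous_onI) (simp add: linL linear_continuous_on linear_linear)
  have oL': "orthogonal_transformation L'"
    unfolding orthogonal_transformation_def L'_def
  proof
    show "linear (\<lambda>y. Phi (L (Psi y)))"
      using linear_compose[OF linear_compose[OF linear_Psi linL] linear_Phi] by (simp add: o_def)
    show "\<forall>v w. Phi (L (Psi v)) \<bullet> Phi (L (Psi w)) = v \<bullet> w"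
      using L by (simp add: Phi_inner Psi_inner2 orthogonal_transformation_def)
  qed
  have mL': "L' \<in> borel_measurable borel" unfolding L'_def using mL meas_Phi meas_Psi by measurable
  have "distr (lborel :: 'a measure) borel L = distr (distr lborel borel Psi) borel L"
    by (simp add: lborel_Psi)
  also have "\<dots> = distr lborel borel (L \<circ> Psi)"
    by (rule distr_distr) (simp_all add: mL meas_Psi)
  also have "L \<circ> Psi = Psi \<circ> L'" by (simp add: fun_eq_iff L'_def Psi_Phi)
  also have "distr lborel borel (Psi \<circ> L') = distr (distr lborel borel L') borel Psi"
    by (rule distr_distr[symmetric]) (simp_all add: mL' meas_Psi)
  also have "\<dots> = lborel" using lborel_orth_cart[OF oL'] lborel_Psi by simp
  finally show ?thesis .
qed

lemma act_add: "act R (u + v) = act R u + act R v"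
  by (simp add: act_def vec_eq_iff matrix_vector_right_distrib)
lemma act_scale: "act R (c *\<^sub>R u) = c *\<^sub>R act R u"
  by (simp add: act_def vec_eq_iff matrix_vector_mult_scaleR)
lemma act_diff: "act R (u - v) = act R u - act R v"
  by (simp add: act_def vec_eq_iff matrix_vector_mult_diff_distrib)
lemma linear_act: "linear (act R)"
  by (rule linearI) (simp_all add: act_add act_scale)

lemma act_comp: "act A (act B z) = act (A ** B) z"
  by (simp add: act_def matrix_vector_mul_assoc)
lemma act_id: "act (mat 1) z = z"
  by (simp add: act_def vec_eq_iff)

lemma O3_transpose: "R \<in> O3 \<Longrightarrow> transpose R \<in> O3"
  by (simp add: O3_def orthogonal_matrix_transpose)
lemma act_tr_act: "R \<in> O3 \<Longrightarrow> act (transpose R) (act R z) = z"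
  by (simp add: act_comp O3_def orthogonal_matrix act_id)
lemma act_act_tr: "R \<in> O3 \<Longrightarrow> act R (act (transpose R) z) = z"
  by (simp add: act_comp O3_def orthogonal_matrix_def act_id)

lemma act_inner: "R \<in> O3 \<Longrightarrow> act R u \<bullet> act R v = u \<bullet> v"
proof -
  assume "R \<in> O3"
  then have ot: "orthogonal_transformation (\<lambda>x. R *v x)"
    by (simp add: O3_def orthogonal_transformation_matrix)
  have "(R *v x) \<bullet> (R *v y) = x \<bullet> y" for x y
    using ot by (simp add: orthogonal_transformation_def)
  then show ?thesis
    by (simp add: act_def inner_prod_def inner_vec_def)
qed

lemma orth_act: "R \<in> O3 \<Longrightarrow> orthogonal_transformation (act R)"
  by (simp add: orthogonal_transformation_def linear_act act_inner)

lemma norm_act: "R \<in> O3 \<Longrightarrow> norm (act R u) = norm u"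
  by (simp add: norm_eq_sqrt_inner act_inner)

lemma act_projU: "act R (projU z) = projU (act R z)"
proof -
  have "R *v ((1 / real CARD('a)) *\<^sub>R (\<Sum>i\<in>UNIV. (v :: (real^3)^'a::finite) $ i))
        = (1 / real CARD('a)) *\<^sub>R (\<Sum>i\<in>UNIV. R *v v $ i)" for v
    by (simp add: matrix_vector_mult_scaleR linear_sum[OF matrix_vector_mul_linear])
  then show ?thesis
    by (simp add: act_def projU_def Let_def vec_eq_iff matrix_vector_mult_diff_distrib)
qed

lemma projU_in: "projU z \<in> Uspace"
proof -
  obtain x h where z: "z = (x, h)" by (cases z)
  define m where "m = (1 / real CARD('a)) *\<^sub>R (\<Sum>j\<in>UNIV. x $ j)"
  have "(\<Sum>i\<in>UNIV. x $ i - m) = (\<Sum>i\<in>UNIV. x $ i) - (\<Sum>i\<in>(UNIV::'a set). m)"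
    by (simp add: sum_subtractf)
  also have "(\<Sum>i\<in>(UNIV::'a set). m) = real CARD('a) *\<^sub>R m" by (rule sum_constant_scaleR)
  also have "real CARD('a) *\<^sub>R m = (\<Sum>j\<in>UNIV. x $ j)" by (simp add: m_def)
  finally have "(\<Sum>i\<in>UNIV. x $ i - m) = 0" by simp
  then show ?thesis
    by (simp add: projU_def Uspace_def z Let_def m_def[symmetric])
qed

lemma Uspace_lin: "u \<in> Uspace \<Longrightarrow> v \<in> Uspace \<Longrightarrow> a *\<^sub>R u + b *\<^sub>R v \<in> Uspace"
  by (auto simp: Uspace_def case_prod_beta sum.distrib scaleR_sum_right[symmetric] scaleR_add_right)

lemma cont_projU: "continuous_on UNIV (projU :: ('n::finite,'d::finite) pt \<Rightarrow> _)"
  unfolding projU_def Let_def by (intro continuous_intros)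

lemma cont_act: "continuous_on UNIV (\<lambda>p. act (fst p) (snd p) :: ('n::finite,'d::finite) pt)"
  unfolding act_def matrix_vector_mult_def by (intro continuous_intros)

lemma cont_transpose: "continuous_on UNIV (transpose :: real^'a::finite^'b::finite \<Rightarrow> _)"
  unfolding transpose_def by (intro continuous_intros)

lemma cont_mmult: "continuous_on UNIV (\<lambda>p. fst p ** snd p :: real^'a::finite^'b::finite)"
  unfolding matrix_matrix_mult_def by (intro continuous_intros)

lemma meas_projU[measurable]: "projU \<in> borel_measurable borel"
  by (rule borel_measurable_continuous_onI[OF cont_projU])

lemma meas_borel_pair:
  fixes f :: "'x \<Rightarrow> 'a::second_countable_topology" and g :: "'x \<Rightarrow> 'b::second_countable_topology"
    and F :: "'a \<Rightarrow> 'b \<Rightarrow> 'c::topological_space"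
  assumes "(\<lambda>p. F (fst p) (snd p)) \<in> borel_measurable borel"
    and "f \<in> borel_measurable M" "g \<in> borel_measurable M"
  shows "(\<lambda>x. F (f x) (g x)) \<in> borel_measurable M"
proof -
  have "(\<lambda>x. (f x, g x)) \<in> M \<rightarrow>\<^sub>M borel \<Otimes>\<^sub>M borel" using assms(2,3) by (rule measurable_Pair)
  then have "(\<lambda>x. (f x, g x)) \<in> M \<rightarrow>\<^sub>M borel" unfolding borel_prod .
  from measurable_compose[OF this assms(1)] show ?thesis by simp
qed

lemma meas_act[measurable (raw)]:
  "f \<in> borel_measurable M \<Longrightarrow> g \<in> borel_measurable M \<Longrightarrow> (\<lambda>x. act (f x) (g x) :: ('n::finite,'d::finite) pt) \<in> borel_measurable M"
  by (rule meas_borel_pair[OF borel_measurable_continuous_onI[OF cont_act]])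

lemma meas_mmult[measurable (raw)]:
  "f \<in> borel_measurable M \<Longrightarrow> g \<in> borel_measurable M \<Longrightarrow> (\<lambda>x. f x ** g x :: real^'a::finite^'b::finite) \<in> borel_measurable M"
  by (rule meas_borel_pair[where F="(**)", OF borel_measurable_continuous_onI[OF cont_mmult]])

lemma meas_transpose[measurable]: "(transpose :: real^'a::finite^'b::finite \<Rightarrow> _) \<in> borel_measurable borel"
  by (rule borel_measurable_continuous_onI[OF cont_transpose])

lemma haar_O3_AE: "is_haar_O3 lam \<Longrightarrow> AE R in lam. R \<in> O3"
  unfolding is_haar_O3_def
  by (auto intro!: prob_space.AE_prob_1 simp: measure_def)

lemma haar_left:
  assumes H: "is_haar_O3 lam" and S: "S \<in> O3" and h[measurable]: "h \<in> borel_measurable borel"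
  shows "(\<integral>\<^sup>+R. h (S ** R) \<partial>lam) = (\<integral>\<^sup>+R. h R \<partial>lam)"
proof -
  have sl: "sets lam = sets borel" using H by (simp add: is_haar_O3_def)
  have m: "(\<lambda>R. S ** R) \<in> lam \<rightarrow>\<^sub>M borel" unfolding measurable_cong_sets[OF sl refl] by measurable
  have "(\<integral>\<^sup>+R. h R \<partial>lam) = (\<integral>\<^sup>+R. h R \<partial>distr lam borel (\<lambda>A. S ** A))"
    using H S by (simp add: is_haar_O3_def)
  also have "\<dots> = (\<integral>\<^sup>+R. h (S ** R) \<partial>lam)"
    by (rule nn_integral_distr[OF m]) simp
  finally show ?thesis by simp
qed

lemma haar_transpose:
  assumes H: "is_haar_O3 lam" and h[measurable]: "h \<in> borel_measurable borel"
  shows "(\<integral>\<^sup>+R. h (transpose R) \<partial>lam) = (\<integral>\<^sup>+R. h R \<partial>lam)"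
proof -
  have sl: "sets lam = sets borel" and P: "prob_space lam" using H by (auto simp: is_haar_O3_def)
  interpret lam: prob_space lam by (rule P)
  interpret pair_sigma_finite lam lam by unfold_locales
  have AE: "AE R in lam. R \<in> O3" by (rule haar_O3_AE[OF H])
  have mp: "(\<lambda>(S, R). h (transpose S ** R)) \<in> borel_measurable (lam \<Otimes>\<^sub>M lam)"
    unfolding measurable_cong_sets[OF sets_pair_measure_cong[OF sl sl] refl]
    by measurable
  have "(\<integral>\<^sup>+S. (\<integral>\<^sup>+R. h (transpose S ** R) \<partial>lam) \<partial>lam) = (\<integral>\<^sup>+S. (\<integral>\<^sup>+R. h R \<partial>lam) \<partial>lam)"
    by (rule nn_integral_cong_AE) (use AE in \<open>eventually_elim, simp add: haar_left[OF H O3_transpose]\<close>)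
  also have "\<dots> = (\<integral>\<^sup>+R. h R \<partial>lam)" by (simp add: lam.emeasure_space_1)
  finally have 1: "(\<integral>\<^sup>+S. (\<integral>\<^sup>+R. h (transpose S ** R) \<partial>lam) \<partial>lam) = (\<integral>\<^sup>+R. h R \<partial>lam)" .
  have "(\<integral>\<^sup>+S. (\<integral>\<^sup>+R. h (transpose S ** R) \<partial>lam) \<partial>lam) = (\<integral>\<^sup>+R. (\<integral>\<^sup>+S. h (transpose S ** R) \<partial>lam) \<partial>lam)"
    using Fubini'[of "\<lambda>S R. h (transpose S ** R)"] mp by simp
  also have "\<dots> = (\<integral>\<^sup>+R. (\<integral>\<^sup>+S. h (transpose S) \<partial>lam) \<partial>lam)"
  proof (rule nn_integral_cong_AE)
    show "AE R in lam. (\<integral>\<^sup>+S. h (transpose S ** R) \<partial>lam) = (\<integral>\<^sup>+S. h (transpose S) \<partial>lam)"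
      using AE
    proof eventually_elim
      case (elim R)
      have "(\<integral>\<^sup>+S. h (transpose S ** R) \<partial>lam) = (\<integral>\<^sup>+S. (\<lambda>A. h (transpose A)) (transpose R ** S) \<partial>lam)"
        by (simp add: matrix_transpose_mul)
      also have "\<dots> = (\<integral>\<^sup>+S. h (transpose S) \<partial>lam)"
        by (rule haar_left[OF H O3_transpose[OF elim]]) measurable
      finally show ?case .
    qed
  qed
  also have "\<dots> = (\<integral>\<^sup>+S. h (transpose S) \<partial>lam)" by (simp add: lam.emeasure_space_1)
  finally show ?thesis using 1 by simp
qed

definition gdens :: "'a::euclidean_space \<Rightarrow> ennreal" where
  "gdens x = ennreal ((2 * pi) powr (- real DIM('a) / 2) * exp (- (norm x)\<^sup>2 / 2))"

lemma std_gauss_eq: "std_gauss = density lborel gdens"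
  by (simp add: std_gauss_def gdens_def[abs_def])

lemma meas_gdens[measurable]: "gdens \<in> borel_measurable borel"
  unfolding gdens_def[abs_def] by measurable

lemma gdens_orth: "orthogonal_transformation T \<Longrightarrow> gdens (T x) = gdens x"
  for T :: "'a::euclidean_space \<Rightarrow> 'a"
  by (simp add: gdens_def orthogonal_transformation_norm)

lemma pipeline:
  fixes Phi :: "real^3^3 \<Rightarrow> ('n::finite,'d::finite) pt \<Rightarrow> ennreal"
  assumes P: "prob_space lam" and sl: "sets lam = sets borel"
    and m: "(\<lambda>p. Phi (fst p) (snd p)) \<in> borel_measurable (borel \<Otimes>\<^sub>M borel)"
  shows "(\<integral>\<^sup>+e. (\<integral>\<^sup>+R. Phi R e \<partial>lam) \<partial>gaussU)
       = (\<integral>\<^sup>+R. (\<integral>\<^sup>+x. gdens x * Phi R (projU x) \<partial>lborel) \<partial>lam)"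
proof -
  interpret lam: prob_space lam by (rule P)
  interpret pair_sigma_finite lborel lam by unfold_locales
  have m1: "(\<lambda>p. Phi (snd p) (fst p)) \<in> borel_measurable (borel \<Otimes>\<^sub>M lam)"
  proof -
    have "(\<lambda>p. (snd p, fst p)) \<in> (borel \<Otimes>\<^sub>M lam) \<rightarrow>\<^sub>M (borel \<Otimes>\<^sub>M borel)"
      unfolding measurable_cong_sets[OF sets_pair_measure_cong[OF refl sl] refl] by measurable
    from measurable_compose[OF this m] show ?thesis by simp
  qed
  have m2: "(\<lambda>p. gdens (fst p) * Phi (snd p) (projU (fst p))) \<in> borel_measurable (lborel \<Otimes>\<^sub>M lam)"
  proof -
    have "(\<lambda>p. (snd p, projU (fst p))) \<in> (lborel \<Otimes>\<^sub>M lam) \<rightarrow>\<^sub>M (borel \<Otimes>\<^sub>M borel)"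
      unfolding measurable_cong_sets[OF sets_pair_measure_cong[OF sets_lborel sl] refl] by measurable
    from measurable_compose[OF this m] have "(\<lambda>p. Phi (snd p) (projU (fst p))) \<in> borel_measurable (lborel \<Otimes>\<^sub>M lam)"
      by simp
    moreover have "(\<lambda>p. gdens (fst p)) \<in> borel_measurable (lborel \<Otimes>\<^sub>M lam)" by measurable
    ultimately show ?thesis by measurable
  qed
  have mi: "(\<lambda>e. \<integral>\<^sup>+R. Phi R e \<partial>lam) \<in> borel_measurable borel"
    using lam.borel_measurable_nn_integral[of "\<lambda>e R. Phi R e" borel] m1 by (simp add: case_prod_beta')
  have mR: "(\<lambda>R. Phi R y) \<in> borel_measurable lam" for y
  proof -
    have "(\<lambda>R. (R, y)) \<in> lam \<rightarrow>\<^sub>M (borel \<Otimes>\<^sub>M borel)"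
      unfolding measurable_cong_sets[OF sl refl] by measurable
    from measurable_compose[OF this m] show ?thesis by simp
  qed
  have sg: "sets std_gauss = sets borel" by (simp add: std_gauss_eq)
  have mp: "projU \<in> std_gauss \<rightarrow>\<^sub>M borel" unfolding measurable_cong_sets[OF sg refl] by measurable
  have "(\<integral>\<^sup>+e. (\<integral>\<^sup>+R. Phi R e \<partial>lam) \<partial>gaussU) = (\<integral>\<^sup>+x. (\<integral>\<^sup>+R. Phi R (projU x) \<partial>lam) \<partial>std_gauss)"
    unfolding gaussU_def by (rule nn_integral_distr[OF mp]) (simp add: mi)
  also have "\<dots> = (\<integral>\<^sup>+x. gdens x * (\<integral>\<^sup>+R. Phi R (projU x) \<partial>lam) \<partial>lborel)"
    unfolding std_gauss_eq by (rule nn_integral_density) (simp_all add: measurable_compose[OF meas_projU mi])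
  also have "\<dots> = (\<integral>\<^sup>+x. (\<integral>\<^sup>+R. gdens x * Phi R (projU x) \<partial>lam) \<partial>lborel)"
    by (rule nn_integral_cong) (simp add: nn_integral_cmult[OF mR])
  also have "\<dots> = (\<integral>\<^sup>+R. (\<integral>\<^sup>+x. gdens x * Phi R (projU x) \<partial>lborel) \<partial>lam)"
    using Fubini'[of "\<lambda>x R. gdens x * Phi R (projU x)"] m2 by (simp add: case_prod_beta')
  finally show ?thesis .
qed

lemma per_z0:
  fixes z0 :: "('n::finite,'d::finite) pt"
    and epsth :: "('n, 'd) pt \<Rightarrow> ('n, 'd) pt"
    and gam :: "('n, 'd) pt \<Rightarrow> (real^3^3) measure"
    and lam :: "(real^3^3) measure"
    and a s w :: real
  assumes H: "is_haar_O3 lam" and em[measurable]: "epsth \<in> borel_measurable borel"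
    and gm: "gam \<in> borel \<rightarrow>\<^sub>M subprob_algebra borel"
    and gl: "\<forall>z\<in>Uspace. gam z = lam" and z0: "z0 \<in> Uspace"
  shows "(\<integral>\<^sup>+ e. (let zt = a *\<^sub>R z0 + s *\<^sub>R e in
        \<integral>\<^sup>+ R. ennreal (1/2 * w * (norm (e - act R (epsth (act (transpose R) zt))))\<^sup>2) \<partial>gam zt) \<partial>gaussU)
       = (\<integral>\<^sup>+ e. \<integral>\<^sup>+ R. ennreal (1/2 * w * (norm (e - epsth (a *\<^sub>R act R z0 + s *\<^sub>R e)))\<^sup>2) \<partial>lam \<partial>gaussU)"
proof -
  have P: "prob_space lam" and sl: "sets lam = sets borel" using H by (auto simp: is_haar_O3_def)
  interpret lam: prob_space lam by (rule P)
  define F where "F R e = ennreal (1/2 * w * (norm (e - act R (epsth (act (transpose R) (a *\<^sub>R z0 + s *\<^sub>R e)))))\<^sup>2)" for R e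
  define G where "G R e = ennreal (1/2 * w * (norm (e - epsth (a *\<^sub>R act R z0 + s *\<^sub>R e)))\<^sup>2)" for R e
  have mF: "(\<lambda>p. F (fst p) (snd p)) \<in> borel_measurable (borel \<Otimes>\<^sub>M borel)" unfolding F_def by measurable
  have mG: "(\<lambda>p. G (fst p) (snd p)) \<in> borel_measurable (borel \<Otimes>\<^sub>M borel)" unfolding G_def by measurable
  have mFs: "(\<lambda>p. F (snd p) (fst p)) \<in> borel_measurable (borel \<Otimes>\<^sub>M borel)"
    using measurable_compose[OF measurable_pair_swap' mF] by (simp add: case_prod_beta' o_def)
  have sg: "sets std_gauss = sets borel" by (simp add: std_gauss_eq)
  have mp: "projU \<in> std_gauss \<rightarrow>\<^sub>M borel" unfolding measurable_cong_sets[OF sg refl] by measurable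
  have mL: "(\<lambda>e. gam (a *\<^sub>R z0 + s *\<^sub>R e)) \<in> borel \<rightarrow>\<^sub>M subprob_algebra borel"
    by (rule measurable_compose[OF _ gm]) measurable
  have m1: "(\<lambda>e. \<integral>\<^sup>+R. F R e \<partial>gam (a *\<^sub>R z0 + s *\<^sub>R e)) \<in> borel_measurable borel"
    by (rule nn_integral_measurable_subprob_algebra2[OF _ mL]) (use mFs in \<open>simp add: case_prod_beta'\<close>)
  have lamsp: "lam \<in> space (subprob_algebra borel)"
    using sl by (simp add: space_subprob_algebra lam.subprob_space_axioms)
  have m2: "(\<lambda>e. \<integral>\<^sup>+R. F R e \<partial>lam) \<in> borel_measurable borel"
    by (rule nn_integral_measurable_subprob_algebra2[OF _ measurable_const[OF lamsp]]) (use mFs in \<open>simp add: case_prod_beta'\<close>)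
  have "(\<integral>\<^sup>+ e. (let zt = a *\<^sub>R z0 + s *\<^sub>R e in
        \<integral>\<^sup>+ R. ennreal (1/2 * w * (norm (e - act R (epsth (act (transpose R) zt))))\<^sup>2) \<partial>gam zt) \<partial>gaussU)
      = (\<integral>\<^sup>+e. (\<integral>\<^sup>+R. F R e \<partial>gam (a *\<^sub>R z0 + s *\<^sub>R e)) \<partial>gaussU)"
    by (simp add: F_def Let_def)
  also have "\<dots> = (\<integral>\<^sup>+x. (\<integral>\<^sup>+R. F R (projU x) \<partial>gam (a *\<^sub>R z0 + s *\<^sub>R projU x)) \<partial>std_gauss)"
    unfolding gaussU_def by (rule nn_integral_distr[OF mp]) (simp add: m1)
  also have "\<dots> = (\<integral>\<^sup>+x. (\<integral>\<^sup>+R. F R (projU x) \<partial>lam) \<partial>std_gauss)"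
    by (rule nn_integral_cong) (simp add: gl Uspace_lin[OF z0 projU_in])
  also have "\<dots> = (\<integral>\<^sup>+e. (\<integral>\<^sup>+R. F R e \<partial>lam) \<partial>gaussU)"
    unfolding gaussU_def by (rule nn_integral_distr[OF mp, symmetric]) (simp add: m2)
  also have "\<dots> = (\<integral>\<^sup>+R. (\<integral>\<^sup>+x. gdens x * F R (projU x) \<partial>lborel) \<partial>lam)"
    by (rule pipeline[OF P sl mF])
  also have "\<dots> = (\<integral>\<^sup>+R. (\<lambda>S. \<integral>\<^sup>+x. gdens x * G S (projU x) \<partial>lborel) (transpose R) \<partial>lam)"
  proof (rule nn_integral_cong_AE)
    show "AE R in lam. (\<integral>\<^sup>+x. gdens x * F R (projU x) \<partial>lborel)
                       = (\<lambda>S. \<integral>\<^sup>+x. gdens x * G S (projU x) \<partial>lborel) (transpose R)"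
      using haar_O3_AE[OF H]
    proof eventually_elim
      case (elim R)
      define T :: "('n,'d) pt \<Rightarrow> ('n,'d) pt" where "T = act (transpose R)"
      have oT: "orthogonal_transformation T" unfolding T_def by (rule orth_act[OF O3_transpose[OF elim]])
      have mT: "T \<in> lborel \<rightarrow>\<^sub>M borel" unfolding T_def by measurable
      define K where "K y = gdens y * G (transpose R) (projU y)" for y
      have mK: "K \<in> borel_measurable borel"
      proof -
        have "(\<lambda>y. (transpose R, projU y)) \<in> borel \<rightarrow>\<^sub>M borel \<Otimes>\<^sub>M borel" by measurable
        from measurable_compose[OF this mG] have "(\<lambda>y. G (transpose R) (projU y)) \<in> borel_measurable borel"
          by simp
        then show ?thesis unfolding K_def by measurable
      qed
      have eqF: "gdens x * F R (projU x) = K (T x)" for x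
      proof -
        have "norm (projU x - act R (epsth (act (transpose R) (a *\<^sub>R z0 + s *\<^sub>R projU x))))
            = norm (act R (act (transpose R) (projU x) - epsth (act (transpose R) (a *\<^sub>R z0 + s *\<^sub>R projU x))))"
          by (simp add: act_diff act_act_tr[OF elim])
        also have "\<dots> = norm (projU (T x) - epsth (a *\<^sub>R act (transpose R) z0 + s *\<^sub>R projU (T x)))"
          by (simp add: norm_act[OF elim] act_add act_scale act_projU T_def)
        finally show ?thesis
          by (simp add: K_def F_def G_def gdens_orth[OF oT])
      qed
      have "(\<integral>\<^sup>+x. gdens x * F R (projU x) \<partial>lborel) = (\<integral>\<^sup>+x. K (T x) \<partial>lborel)"
        by (simp add: eqF)
      also have "\<dots> = (\<integral>\<^sup>+y. K y \<partial>distr lborel borel T)"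
        by (rule nn_integral_distr[OF mT, symmetric]) (simp add: mK)
      also have "\<dots> = (\<integral>\<^sup>+y. K y \<partial>lborel)" by (simp add: lborel_orth_invariant[OF oT])
      finally show ?case by (simp add: K_def)
    qed
  qed
  also have "\<dots> = (\<integral>\<^sup>+R. (\<integral>\<^sup>+x. gdens x * G R (projU x) \<partial>lborel) \<partial>lam)"
  proof (rule haar_transpose[OF H])
    have "(\<lambda>p. gdens (snd p) * G (fst p) (projU (snd p))) \<in> borel_measurable (borel \<Otimes>\<^sub>M lborel)"
    proof -
      have "(\<lambda>p. (fst p, projU (snd p))) \<in> (borel \<Otimes>\<^sub>M lborel) \<rightarrow>\<^sub>M (borel \<Otimes>\<^sub>M borel)"
        unfolding measurable_cong_sets[OF sets_pair_measure_cong[OF refl sets_lborel] refl] by measurable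
      from measurable_compose[OF this mG] have "(\<lambda>p. G (fst p) (projU (snd p))) \<in> borel_measurable (borel \<Otimes>\<^sub>M lborel)"
        by simp
      then show ?thesis by measurable
    qed
    then show "(\<lambda>S. \<integral>\<^sup>+x. gdens x * G S (projU x) \<partial>lborel) \<in> borel_measurable borel"
      using lborel.borel_measurable_nn_integral[of "\<lambda>S x. gdens x * G S (projU x)" borel]
      by (simp add: case_prod_beta')
  qed
  also have "\<dots> = (\<integral>\<^sup>+e. (\<integral>\<^sup>+R. G R e \<partial>lam) \<partial>gaussU)"
    by (rule pipeline[OF P sl mG, symmetric])
  finally show ?thesis by (simp add: G_def)
qed


theorem proposition2:
  fixes q :: "('n::finite, 'd::finite) pt measure"
    and epsth :: "('n, 'd) pt \<Rightarrow> ('n, 'd) pt"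
    and gam :: "('n, 'd) pt \<Rightarrow> (real^3^3) measure"
    and lam :: "(real^3^3) measure"
    and a s w :: real
  assumes "is_haar_O3 lam"
    and "prob_space q" and "sets q = sets borel" and "emeasure q Uspace = 1"
    and "a > 0" and "s > 0" and "w \<ge> 0"
    and "epsth \<in> borel_measurable borel" and "\<forall>z\<in>Uspace. epsth z \<in> Uspace"
    and "gam \<in> borel \<rightarrow>\<^sub>M subprob_algebra borel"
    and "\<forall>z. prob_space (gam z)"
    and "\<forall>z\<in>Uspace. gam z = lam"
  shows "loss_t q a s w epsth gam = loss_aug q a s w epsth lam"
proof -
  have AE: "AE z0 in q. z0 \<in> Uspace"
    using prob_space.AE_prob_1[OF assms(2), of Uspace] assms(4) by (simp add: measure_def)
  show ?thesis unfolding loss_t_def loss_aug_def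
  proof (rule nn_integral_cong_AE)
    show "AE z0 in q. (\<integral>\<^sup>+ e. (let zt = a *\<^sub>R z0 + s *\<^sub>R e in
        \<integral>\<^sup>+ R. ennreal (1/2 * w * (norm (e - act R (epsth (act (transpose R) zt))))\<^sup>2) \<partial>gam zt) \<partial>gaussU)
       = (\<integral>\<^sup>+ e. \<integral>\<^sup>+ R. ennreal (1/2 * w * (norm (e - epsth (a *\<^sub>R act R z0 + s *\<^sub>R e)))\<^sup>2) \<partial>lam \<partial>gaussU)"
      using AE
    proof eventually_elim
      case (elim z0)
      show ?case by (rule per_z0[OF assms(1) assms(8) assms(10) assms(12) elim])
    qed
  qed
qed

end
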